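(* Let $\rho$ be a one-qubit density matrix parameterized as $\rho=\rho(x,y,z)=\begin{pmatrix}\frac{1+z}{2}&\frac{x-iy}{2}\\ \frac{x+iy}{2}&\frac{1-z}{2}\end{pmatrix}$ with $x,y,z\in\mathbb{R}$, $r=\sqrt{x^2+y^2+z^2}<1$. Define the transformation from $\rho$ to $\hat{\rho}$ by \[ \hat{\rho}=-\log \rho + \frac{1}{2} \log \frac{1-r^2}{4}\cdot I \] and define \[ u=-\frac{\partial}{\partial x} \mathrm{Tr}\, \rho \log \rho,\quad v=-\frac{\partial}{\partial y} \mathrm{Tr}\, \rho \log \rho,\quad w=-\frac{\partial}{\partial z} \mathrm{Tr}\, \rho \log \rho . \] Then $\hat{\rho}$ can be expressed as \[ \hat{\rho}(u,v,w)=\begin{pmatrix} w& u-iv\\ u+iv & -w\end{pmatrix}. \]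
   Context: For a Hermitian matrix $\rho=U\,\mathrm{diag}(\lambda_1,\ldots,\lambda_d)\,U^*$ with $U$ unitary and a function $f:\mathbb{R}\to\mathbb{R}$, $f(\rho)$ is defined as $U\,\mathrm{diag}(f(\lambda_1),\ldots,f(\lambda_d))\,U^*$; in particular $\log\rho$ is defined this way. The one-qubit state space is the Bloch ball $x^2+y^2+z^2\le 1$; the eigenvalues of $\rho(x,y,z)$ are $\frac{1\pm r}{2}$, so $\log\rho$ is defined for $r<1$. $I$ is the $2\times 2$ identity matrix. *)

theory Defs
  imports "HOL-Analysis.Analysis"
begin

definition cadj :: "complex^2^2 \<Rightarrow> complex^2^2" where
  "cadj U = (\<chi> i j. cnj (U $ j $ i))"

definition unitary2 :: "complex^2^2 \<Rightarrow> bool" where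
  "unitary2 U \<longleftrightarrow> U ** cadj U = mat 1 \<and> cadj U ** U = mat 1"

definition cdiag :: "(2 \<Rightarrow> real) \<Rightarrow> complex^2^2" where
  "cdiag d = (\<chi> i j. if i = j then complex_of_real (d i) else 0)"

definition matfun :: "(real \<Rightarrow> real) \<Rightarrow> complex^2^2 \<Rightarrow> complex^2^2" where
  "matfun f A = (SOME M. \<exists>U d. unitary2 U \<and> A = U ** cdiag d ** cadj U
                     \<and> M = U ** cdiag (\<lambda>i. f (d i)) ** cadj U)"

definition mlog :: "complex^2^2 \<Rightarrow> complex^2^2" where
  "mlog A = matfun ln A"

definition mat2 :: "complex \<Rightarrow> complex \<Rightarrow> complex \<Rightarrow> complex \<Rightarrow> complex^2^2" where
  "mat2 a b c d = (\<chi> i j. if i = 1 then (if j = 1 then a else b) else (if j = 1 then c else d))"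

definition qubit :: "real \<Rightarrow> real \<Rightarrow> real \<Rightarrow> complex^2^2" where
  "qubit x y z = mat2 ((1 + z) / 2) (Complex x (- y) / 2) (Complex x y / 2) ((1 - z) / 2)"

text \<open>Tr (rho log rho) as a function of the Bloch coordinates (it is real; we take the real part).\<close>
definition trlog :: "real \<Rightarrow> real \<Rightarrow> real \<Rightarrow> real" where
  "trlog x y z = Re (trace (qubit x y z ** mlog (qubit x y z)))"

end

theory Submission
  imports Defs
begin

lemma mmul_entry: "(A ** B) $ i $ j = (\<Sum>k\<in>UNIV. A$i$k * B$k$j)"
  by (simp add: matrix_matrix_mult_def)

lemma udu_entry:
  fixes U :: "complex^2^2"
  shows "(U ** cdiag g ** cadj U) $ i $ j = (\<Sum>k\<in>UNIV. U$i$k * of_real (g k) * cnj (U$j$k))"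
proof -
  have "(U ** cdiag g ** cadj U) $ i $ j = (\<Sum>k\<in>UNIV. (\<Sum>l\<in>UNIV. U$i$l * cdiag g $l$k) * cnj (U$j$k))"
    by (simp add: mmul_entry cadj_def)
  also have "\<dots> = (\<Sum>k\<in>UNIV. U$i$k * of_real (g k) * cnj (U$j$k))"
    by (simp add: cdiag_def if_distrib cong: if_cong)
  finally show ?thesis .
qed

lemma uu_entry:
  fixes U :: "complex^2^2"
  assumes "unitary2 U"
  shows "(\<Sum>k\<in>UNIV. U$i$k * cnj (U$j$k)) = (if i = j then 1 else 0)"
proof -
  have "(U ** cadj U) $ i $ j = (if i = j then 1 else 0)"
    using assms by (simp add: unitary2_def mat_def)
  thus ?thesis by (simp add: mmul_entry cadj_def)
qed

lemma matfun_lin: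
  fixes U :: "complex^2^2"
  assumes "unitary2 U" and "\<And>i. f (d i) = a + b * d i"
  shows "(U ** cdiag (\<lambda>i. f (d i)) ** cadj U) $ i $ j
     = (if i = j then of_real a else 0) + of_real b * (U ** cdiag d ** cadj U) $ i $ j"
proof -
  have "(U ** cdiag (\<lambda>i. f (d i)) ** cadj U) $ i $ j
      = (\<Sum>k\<in>UNIV. of_real a * (U$i$k * cnj (U$j$k)) + of_real b * (U$i$k * of_real (d k) * cnj (U$j$k)))"
    unfolding udu_entry assms(2) by (simp add: algebra_simps)
  also have "\<dots> = of_real a * (\<Sum>k\<in>UNIV. U$i$k * cnj (U$j$k)) + of_real b * (U ** cdiag d ** cadj U) $ i $ j"
    by (simp add: sum.distrib sum_distrib_left udu_entry)
  finally show ?thesis using uu_entry[OF assms(1)] by simp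
qed

lemma trace_udu:
  fixes U :: "complex^2^2"
  assumes "unitary2 U"
  shows "trace (U ** cdiag d ** cadj U) = of_real (d 1 + d 2)"
proof -
  have "trace (U ** cdiag d ** cadj U) = trace (cdiag d ** (cadj U ** U))"
    by (metis matrix_mul_assoc trace_mul_sym)
  also have "\<dots> = trace (cdiag d)" using assms by (simp add: unitary2_def)
  finally show ?thesis by (simp add: trace_def sum_2 cdiag_def)
qed

lemma det_udu:
  fixes U :: "complex^2^2"
  assumes "unitary2 U"
  shows "det (U ** cdiag d ** cadj U) = of_real (d 1 * d 2)"
proof -
  have dc: "det (cadj U) = cnj (det U)" by (simp add: det_2 cadj_def)
  have "det U * det (cadj U) = 1"
    using assms by (metis det_mul det_I unitary2_def)
  moreover have "det (cdiag d) = of_real (d 1 * d 2)" by (simp add: det_2 cdiag_def)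
  ultimately show ?thesis by (simp add: det_mul)
qed

definition lp :: "real \<Rightarrow> real" where "lp r = ln ((1 + r) / 2)"
definition lm :: "real \<Rightarrow> real" where "lm r = ln ((1 - r) / 2)"
definition bet :: "real \<Rightarrow> real" where "bet r = (lp r - lm r) / r"
definition alp :: "real \<Rightarrow> real" where "alp r = lp r - bet r * (1 + r) / 2"

lemma interp:
  assumes "0 \<le> r" "r < 1" "t = (1 + r)/2 \<or> t = (1 - r)/2"
  shows "ln t = alp r + bet r * t"
proof (cases "r = 0")
  case True thus ?thesis using assms by (simp add: alp_def bet_def lp_def)
next
  case False
  from assms(3) show ?thesis
  proof
    assume t: "t = (1 + r)/2"
    show ?thesis unfolding t alp_def bet_def lp_def using False by (simp add: field_simps)
  next
    assume t: "t = (1 - r)/2"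
    show ?thesis unfolding t alp_def bet_def lp_def lm_def using False by (simp add: field_simps)
  qed
qed

lemma qubit_entries:
  "qubit x y z $ 1 $ 1 = (1 + z)/2" "qubit x y z $ 1 $ 2 = Complex x (-y) / 2"
  "qubit x y z $ 2 $ 1 = Complex x y / 2" "qubit x y z $ 2 $ 2 = (1 - z)/2"
  by (simp_all add: qubit_def mat2_def)

lemma sum_squares_ge0: "0 \<le> (x::real)^2+y^2+z^2" by simp

lemma eig:
  fixes U :: "complex^2^2"
  assumes U: "unitary2 U" and A: "qubit x y z = U ** cdiag d ** cadj U"
  shows "d i = (1 + sqrt (x^2+y^2+z^2))/2 \<or> d i = (1 - sqrt (x^2+y^2+z^2))/2"
proof -
  have t: "d 1 + d 2 = 1"
    using trace_udu[OF U, of d] A[symmetric]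
    by (simp add: trace_def sum_2 qubit_entries complex_eq_iff add_divide_distrib[symmetric])
  have dt: "d 1 * d 2 = (1 - (x^2+y^2+z^2))/4"
    using det_udu[OF U, of d] A[symmetric]
    by (simp add: det_2 qubit_entries complex_eq_iff field_simps power2_eq_square)
  have q: "(2 * d i - 1)^2 = (sqrt (x^2+y^2+z^2))^2"
  proof -
    have d2: "d 2 = 1 - d 1" using t by simp
    have dt': "d 1 * (1 - d 1) = (1 - (x^2+y^2+z^2))/4" using dt d2 by simp
    have "(2 * d 1 - 1)^2 = (sqrt (x^2+y^2+z^2))^2" "(2 * d 2 - 1)^2 = (sqrt (x^2+y^2+z^2))^2"
      using dt' unfolding d2 real_sqrt_pow2[OF sum_squares_ge0] 
      by (simp_all add: power2_eq_square algebra_simps)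
    thus ?thesis using exhaust_2[of i] by auto
  qed
  hence "2 * d i - 1 = sqrt (x^2+y^2+z^2) \<or> 2 * d i - 1 = - sqrt (x^2+y^2+z^2)"
    using power2_eq_iff by blast
  thus ?thesis by auto
qed

lemma forall2: "(\<forall>i::2. P i) \<longleftrightarrow> P 1 \<and> P 2"
  using exhaust_2 by metis

lemma mat_eq2: "(A::'a^2^2) = B \<longleftrightarrow> A$1$1 = B$1$1 \<and> A$1$2 = B$1$2 \<and> A$2$1 = B$2$1 \<and> A$2$2 = B$2$2"
  by (simp add: vec_eq_iff forall2)

lemma udu2:
  fixes U :: "complex^2^2"
  shows "U ** cdiag g ** cadj U = mat2
     (U$1$1 * g 1 * cnj (U$1$1) + U$1$2 * g 2 * cnj (U$1$2))
     (U$1$1 * g 1 * cnj (U$2$1) + U$1$2 * g 2 * cnj (U$2$2))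
     (U$2$1 * g 1 * cnj (U$1$1) + U$2$2 * g 2 * cnj (U$1$2))
     (U$2$1 * g 1 * cnj (U$2$1) + U$2$2 * g 2 * cnj (U$2$2))"
  by (simp add: mat_eq2 udu_entry sum_2 mat2_def)

lemma unitary_mat2:
  assumes "cmod a ^ 2 + cmod b ^ 2 = 1"
  shows "unitary2 (mat2 a (- cnj b) b (cnj a))"
proof -
  have e: "a * cnj a + b * cnj b = 1" "cnj a * a + cnj b * b = 1"
    using assms[unfolded cmod_power2] by (simp_all add: complex_mult_cnj mult.commute flip: of_real_add of_real_power)
  show ?thesis unfolding unitary2_def
    using e by (simp add: mat_eq2 mmul_entry sum_2 cadj_def mat2_def mat_def algebra_simps)
qed

lemma aux1:
  fixes r z x y c :: real
  assumes "r > 0" "r + z > 0" "x*x+y*y = (r-z)*(r+z)"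
  shows "x*(c*x)/(r*(r+z)) + y*(c*y)/(r*(r+z)) = c*(r-z)/r"
proof -
  have "x*(c*x)/(r*(r+z)) + y*(c*y)/(r*(r+z)) = c*(x*x+y*y)/(r*(r+z))"
    by (simp add: add_divide_distrib[symmetric] algebra_simps)
  also have "\<dots> = c*(r-z)/r" using assms by (simp add: assms(3))
  finally show ?thesis .
qed

lemma decomp_exists:
  "\<exists>U d. unitary2 U \<and> qubit x y z = U ** cdiag d ** cadj U"
proof (cases "x = 0 \<and> y = 0")
  case True
  have "unitary2 (mat2 1 (- cnj 0) 0 (cnj 1))" by (rule unitary_mat2) simp
  moreover have "qubit x y z = mat2 1 (- cnj 0) 0 (cnj 1) ** cdiag (\<lambda>i. if i = 1 then (1+z)/2 else (1-z)/2) ** cadj (mat2 1 (- cnj 0) 0 (cnj 1))"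
    using True unfolding udu2 by (simp add: mat_eq2 mat2_def qubit_def complex_eq_iff)
  ultimately show ?thesis by blast
next
  case False
  define r where "r = sqrt (x^2+y^2+z^2)"
  have r2: "r^2 = x^2+y^2+z^2" unfolding r_def by simp
  have xy: "x^2 + y^2 > 0" using False by (auto simp: add_pos_pos sum_power2_gt_zero_iff)
  have rz: "r > \<bar>z\<bar>" unfolding r_def using xy
    by (metis abs_ge_zero add.commute add_less_same_cancel1 power2_less_imp_less real_sqrt_abs real_sqrt_less_iff add_pos_nonneg zero_le_power2 less_add_same_cancel1)
  hence rzp: "r + z > 0" by linarith
  have rp: "r > 0" using rz by linarith
  define N where "N = sqrt (2 * r * (r + z))"
  have N2: "N^2 = 2 * r * (r + z)" unfolding N_def using rp rzp by simp
  have Np: "N > 0" unfolding N_def using rp rzp by simp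
  define a where "a = complex_of_real ((r + z) / N)"
  define b where "b = Complex (x / N) (y / N)"
  have ab: "cmod a ^ 2 + cmod b ^ 2 = 1"
  proof -
    have "cmod a ^ 2 + cmod b ^ 2 = ((r+z)^2 + x^2 + y^2) / N^2"
      unfolding a_def b_def cmod_power2 by (simp add: power_divide add_divide_distrib flip: add_divide_distrib)
    also have "(r+z)^2 + x^2 + y^2 = N^2" using N2 r2 by (simp add: power2_eq_square algebra_simps)
    also have "N^2 / N^2 = 1" using Np by simp
    finally show ?thesis .
  qed
  define d where "d = (\<lambda>i::2. if i = 1 then (1 + r)/2 else (1 - r)/2)"
  have "qubit x y z = mat2 a (- cnj b) b (cnj a) ** cdiag d ** cadj (mat2 a (- cnj b) b (cnj a))"
  proof -
    have NN: "N * N = 2 * r * (r + z)" using N2 by (simp add: power2_eq_square)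
    have NN2: "N * (2 * N) = 4 * r * (r + z)" "N * (N * 2) = 4 * r * (r + z)" using NN by (simp_all add: algebra_simps)
    have nz: "r*r + r*z \<noteq> 0" "r * (r * 4) + r * (z * 4) \<noteq> 0"
    proof -
      have rr: "r*(r+z) > 0" "4*(r*(r+z)) > 0" using rp rzp by simp_all
      have "r*r + r*z = r*(r+z)" "r * (r * 4) + r * (z * 4) = 4*(r*(r+z))" by (simp_all add: algebra_simps)
      thus "r*r + r*z \<noteq> 0" "r * (r * 4) + r * (z * 4) \<noteq> 0" using rr by (metis less_irrefl)+
    qed
    have xy2: "x*x+y*y = (r-z)*(r+z)" using r2 by (simp add: power2_eq_square algebra_simps)
    have rzp0: "r + z \<noteq> 0" and rp0: "r \<noteq> 0" using rp rzp by auto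
    have xx: "x * x = r * r - z * z - y * y" using r2 by (simp add: power2_eq_square)
    show ?thesis
    unfolding udu2 mat_eq2 using rp rzp
    apply (simp add: mat2_def qubit_def d_def a_def b_def complex_eq_iff NN)
    apply (intro conjI)
    apply (simp_all add: aux1[OF rp rzp xy2] NN2)
    apply (simp_all add: field_simps rp rzp0 rp0)
    done
  qed
  with unitary_mat2[OF ab] show ?thesis by blast
qed

lemma mlog_qubit:
  assumes "sqrt (x^2+y^2+z^2) < 1"
  shows "mlog (qubit x y z) = (\<chi> i j. (if i = j then of_real (alp (sqrt (x^2+y^2+z^2))) else 0)
             + of_real (bet (sqrt (x^2+y^2+z^2))) * qubit x y z $ i $ j)"
proof -
  let ?r = "sqrt (x^2+y^2+z^2)"
  let ?P = "\<lambda>M. \<exists>U d. unitary2 U \<and> qubit x y z = U ** cdiag d ** cadj U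
                     \<and> M = U ** cdiag (\<lambda>i. ln (d i)) ** cadj U"
  have "\<exists>M. ?P M" using decomp_exists[of x y z] by blast
  hence "?P (SOME M. ?P M)" by (rule someI_ex)
  then obtain U d where U: "unitary2 U" and A: "qubit x y z = U ** cdiag d ** cadj U"
    and M: "(SOME M. ?P M) = U ** cdiag (\<lambda>i. ln (d i)) ** cadj U" by blast
  have lin: "\<And>i. ln (d i) = alp ?r + bet ?r * d i"
    by (rule interp[OF _ assms eig[OF U A]]) simp
  show ?thesis
    unfolding mlog_def matfun_def M
    by (simp add: vec_eq_iff matfun_lin[where f=ln and d=d, OF U lin] A)
qed

definition g :: "real \<Rightarrow> real" where "g r = (1 + r)/2 * lp r + (1 - r)/2 * lm r"

lemma br: "bet r * r = lp r - lm r"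
  by (cases "r = 0") (simp_all add: bet_def lp_def lm_def)

lemma alpg: "alp r + bet r * ((1 + r^2)/2) = g r"
proof -
  have "alp r + bet r * ((1 + r^2)/2) = lp r + (bet r * r) * (r - 1)/2"
    by (simp add: alp_def power2_eq_square field_simps)
  also have "\<dots> = g r" unfolding br by (simp add: g_def field_simps)
  finally show ?thesis .
qed

lemma trlog_eq:
  assumes "sqrt (x^2+y^2+z^2) < 1"
  shows "trlog x y z = g (sqrt (x^2+y^2+z^2))"
proof -
  let ?r = "sqrt (x^2+y^2+z^2)"
  have r2: "?r^2 = x^2+y^2+z^2" by simp
  have "trlog x y z = alp ?r + bet ?r * (((1+z)^2 + (1-z)^2)/4 + (x^2+y^2)/2)"
    unfolding trlog_def mlog_qubit[OF assms]
    by (simp add: trace_def mmul_entry sum_2 qubit_entries power2_eq_square field_simps)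
  also have "((1+z)^2 + (1-z)^2)/4 + (x^2+y^2)/2 = (1 + ?r^2)/2"
    unfolding r2 by (simp add: power2_eq_square field_simps)
  also have "alp ?r + bet ?r * ((1 + ?r^2)/2) = g ?r" by (rule alpg)
  finally show ?thesis .
qed

lemma g_deriv:
  assumes "\<bar>r\<bar> < 1"
  shows "(g has_real_derivative (lp r - lm r)/2) (at r)"
proof -
  have d1: "(lp has_real_derivative (1/(1+r))) (at r)"
    unfolding lp_def using assms by (auto intro!: derivative_eq_intros simp: field_simps)
  have d2: "(lm has_real_derivative (-1/(1-r))) (at r)"
    unfolding lm_def using assms by (auto intro!: derivative_eq_intros simp: field_simps)
  have e1: "((\<lambda>r. (1+r)/2) has_real_derivative 1/2) (at r)"
    by (auto intro!: derivative_eq_intros)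
  have e2: "((\<lambda>r. (1-r)/2) has_real_derivative -1/2) (at r)"
    by (auto intro!: derivative_eq_intros)
  have "(g has_real_derivative (1/2 * lp r + (1/(1+r)) * ((1+r)/2) + (-1/2 * lm r + (-1/(1-r)) * ((1-r)/2)))) (at r)"
    unfolding g_def by (intro DERIV_add DERIV_mult e1 e2 d1 d2)
  moreover have "1/2 * lp r + (1/(1+r)) * ((1+r)/2) + (-1/2 * lm r + (-1/(1-r)) * ((1-r)/2)) = (lp r - lm r)/2"
  proof -
    have "1 + r \<noteq> 0" "1 - r \<noteq> 0" using assms by auto
    hence "(1/(1+r)) * ((1+r)/2) = 1/2" "(-1/(1-r)) * ((1-r)/2) = -1/2" by simp_all
    thus ?thesis by (simp add: field_simps)
  qed
  ultimately show ?thesis by (metis (no_types))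
qed

lemma g_even: "g (- r) = g r"
  by (simp add: g_def lp_def lm_def algebra_simps)

lemma h_deriv:
  fixes a c :: real
  assumes c: "c \<ge> 0" and ac: "a^2 + c < 1"
  shows "((\<lambda>t. g (sqrt (t^2 + c))) has_real_derivative
           ((lp (sqrt (a^2+c)) - lm (sqrt (a^2+c)))/2 * a / sqrt (a^2+c))) (at a)"
proof (cases "a^2 + c > 0")
  case True
  let ?R = "sqrt (a^2+c)"
  have R1: "\<bar>?R\<bar> < 1" using ac True by simp
  have s: "((\<lambda>t. sqrt (t^2 + c)) has_real_derivative (a / ?R)) (at a)"
    using True by (auto intro!: derivative_eq_intros simp: field_simps)
  from DERIV_chain2[OF g_deriv[OF R1] s] show ?thesis by (simp add: mult.assoc)
next
  case False
  have "a^2 + c = 0" using False c by (metis add_nonneg_nonneg less_eq_real_def zero_le_power2)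
  hence a0: "a = 0" and c0: "c = 0" using c by (simp_all add: add_nonneg_eq_0_iff)
  have f: "(\<lambda>t. g (sqrt (t^2 + c))) = g"
  proof
    fix t show "g (sqrt (t^2 + c)) = g t"
      using g_even[of t] by (cases "t \<ge> 0") (simp_all add: c0)
  qed
  have "(g has_real_derivative (lp 0 - lm 0)/2) (at 0)" by (rule g_deriv) simp
  hence "(g has_real_derivative 0) (at 0)" by (simp add: lp_def lm_def)
  thus ?thesis unfolding f by (simp add: a0)
qed

lemma F_deriv:
  fixes a c :: real
  assumes c: "c \<ge> 0" and ac: "a^2 + c < 1"
    and F: "\<And>t. t^2 + c < 1 \<Longrightarrow> F t = g (sqrt (t^2 + c))"
  shows "(F has_real_derivative
           ((lp (sqrt (a^2+c)) - lm (sqrt (a^2+c)))/2 * a / sqrt (a^2+c))) (at a)"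
proof (rule has_field_derivative_transform_within_open[OF h_deriv[OF c ac]])
  show "open {t::real. t^2 + c < 1}"
    by (rule open_Collect_less) (auto intro!: continuous_intros)
qed (use ac F in auto)

theorem mainTheorem6:
  fixes x y z :: real
  assumes "sqrt (x^2 + y^2 + z^2) < 1"
  shows "(\<lambda>t. trlog t y z) differentiable (at x)
       \<and> (\<lambda>t. trlog x t z) differentiable (at y)
       \<and> (\<lambda>t. trlog x y t) differentiable (at z)
       \<and> (let r = sqrt (x^2 + y^2 + z^2);
              u = - deriv (\<lambda>t. trlog t y z) x;
              v = - deriv (\<lambda>t. trlog x t z) y;
              w = - deriv (\<lambda>t. trlog x y t) z
          in - mlog (qubit x y z) + mat (complex_of_real ((1/2) * ln ((1 - r^2) / 4)))
             = mat2 (complex_of_real w) (Complex u (- v)) (Complex u v) (complex_of_real (- w)))"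
proof -
  define R where "R = sqrt (x^2 + y^2 + z^2)"
  define D where "D = (lp R - lm R)/2"
  have s1: "x^2 + y^2 + z^2 < 1" using assms by simp
  have hx: "((\<lambda>t. trlog t y z) has_real_derivative D * x / R) (at x)"
  proof -
    have "((\<lambda>t. trlog t y z) has_real_derivative
           ((lp (sqrt (x^2+(y^2+z^2))) - lm (sqrt (x^2+(y^2+z^2))))/2 * x / sqrt (x^2+(y^2+z^2)))) (at x)"
      by (rule F_deriv) (use s1 trlog_eq in \<open>auto simp: add.assoc\<close>)
    thus ?thesis by (simp add: D_def R_def add.assoc)
  qed
  have hy: "((\<lambda>t. trlog x t z) has_real_derivative D * y / R) (at y)"
  proof -
    have "((\<lambda>t. trlog x t z) has_real_derivative
           ((lp (sqrt (y^2+(x^2+z^2))) - lm (sqrt (y^2+(x^2+z^2))))/2 * y / sqrt (y^2+(x^2+z^2)))) (at y)"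
      by (rule F_deriv) (use s1 trlog_eq in \<open>auto simp: add_ac\<close>)
    thus ?thesis by (simp add: D_def R_def add_ac)
  qed
  have hz: "((\<lambda>t. trlog x y t) has_real_derivative D * z / R) (at z)"
  proof -
    have "((\<lambda>t. trlog x y t) has_real_derivative
           ((lp (sqrt (z^2+(x^2+y^2))) - lm (sqrt (z^2+(x^2+y^2))))/2 * z / sqrt (z^2+(x^2+y^2)))) (at z)"
      by (rule F_deriv) (use s1 trlog_eq in \<open>auto simp: add_ac\<close>)
    thus ?thesis by (simp add: D_def R_def add_ac)
  qed
  have dx: "deriv (\<lambda>t. trlog t y z) x = D * x / R" using hx by (rule DERIV_imp_deriv)
  have dy: "deriv (\<lambda>t. trlog x t z) y = D * y / R" using hy by (rule DERIV_imp_deriv)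
  have dz: "deriv (\<lambda>t. trlog x y t) z = D * z / R" using hz by (rule DERIV_imp_deriv)
  have R0: "R \<ge> 0" "R < 1" using assms by (simp_all add: R_def)
  have lnR: "ln ((1 - R^2)/4) = lp R + lm R"
  proof -
    have e: "(1 - R^2)/4 = ((1+R)/2) * ((1-R)/2)" by (simp add: power2_eq_square field_simps)
    have p: "(1+R)/2 > 0" "(1-R)/2 > 0" using R0 by auto
    show ?thesis unfolding e lp_def lm_def using p by (simp only: ln_mult) simp
  qed
  have mateq: "- mlog (qubit x y z) + mat (complex_of_real ((1/2) * ln ((1 - R^2) / 4)))
     = mat2 (complex_of_real (- (D * z / R))) (Complex (- (D * x / R)) (- (- (D * y / R))))
            (Complex (- (D * x / R)) (- (D * y / R))) (complex_of_real (- (- (D * z / R))))"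
  proof (cases "R = 0")
    case True
    have "x^2+y^2+z^2 = 0" using True by (simp add: R_def)
    hence xyz: "x = 0" "y = 0" "z = 0" by (simp_all add: add_nonneg_eq_0_iff)
    show ?thesis unfolding mlog_qubit[OF assms] R_def[symmetric] lnR
      using True
      by (simp add: mat_eq2 mat_def mat2_def qubit_entries xyz alp_def bet_def lp_def lm_def complex_eq_iff)
  next
    case False
    have b: "bet R = 2 * D / R" using False by (simp add: bet_def D_def field_simps)
    have a: "alp R = lp R - D * (1 + R) / R" by (simp add: alp_def b)
    show ?thesis unfolding mlog_qubit[OF assms] R_def[symmetric] lnR
      using False
      by (simp add: mat_eq2 mat_def mat2_def qubit_entries a b complex_eq_iff D_def field_simps)
  qed
  show ?thesis
    using hx hy hz mateq
    unfolding dx dy dz R_def[symmetric]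
    by (auto simp: Let_def real_differentiable_def)
qed

end
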